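(* Define $f_i:\mathbb{R}^3\times\mathbb{R}^2\to\mathbb{R}$ by $f_1(p,x)=-x_2-\tfrac12x_1^2-p_1+p_2x_2$, $f_2(p,x)=x_2-\tfrac12x_1^2-p_2+p_1x_1$, $f_3(p,x)=x_1+|x_2|^{3/2}-p_3$, and let $P:=\{p\in\mathbb{R}^3: -p_1-p_2+\tfrac32p_1^2\le0\}$. Then the parametric system $f_i(p,x)\le0$, $i=1,2,3$, $p\in P$, enjoys Robinson stability at $(\bar p,\bar x)=(0,0)\in\mathbb{R}^3\times\mathbb{R}^2$, i.e. there exist $\kappa\ge0$ and neighborhoods $V$ of $0$ in $P$ and $U$ of $0$ in $\mathbb{R}^2$ such that $\operatorname{dist}(x;\Gamma(p))\le\kappa\operatorname{dist}((f_1,f_2,f_3)(p,x);\mathbb{R}^3_-)$ for all $(p,x)\in V\times U$, where $\Gamma(p)=\{x:f_i(p,x)\le0,\ i=1,2,3\}$; whereas the Mangasarian–Fromovitz constraint qualification fails for the system $f_i(0,x)\le0$, $i=1,2,3$, at $x=0$.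
   Context: The Mangasarian–Fromovitz constraint qualification for the inequality system $\phi_i(x)\le0$ at a feasible $\bar x$ (all $\phi_i$ differentiable) means there exists $d$ with $\langle\nabla\phi_i(\bar x),d\rangle<0$ for all active indices $i$ (those with $\phi_i(\bar x)=0$). *)

theory Defs
  imports "HOL-Analysis.Analysis"
begin

definition cf :: "nat \<Rightarrow> real^3 \<Rightarrow> real^2 \<Rightarrow> real" where
  "cf i p x =
     (if i = 1 then - x$2 - (1/2) * (x$1)^2 - p$1 + p$2 * x$2
      else if i = 2 then x$2 - (1/2) * (x$1)^2 - p$2 + p$1 * x$1
      else x$1 + \<bar>x$2\<bar> powr (3/2) - p$3)"

definition cF :: "real^3 \<Rightarrow> real^2 \<Rightarrow> real^3" where
  "cF p x = (\<chi> i. if i = 1 then cf 1 p x else if i = 2 then cf 2 p x else cf 3 p x)"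

definition Pset :: "(real^3) set" where
  "Pset = {p. - p$1 - p$2 + (3/2) * (p$1)^2 \<le> 0}"

definition Gamma :: "real^3 \<Rightarrow> (real^2) set" where
  "Gamma p = {x. \<forall>i\<in>{1,2,3}. cf i p x \<le> 0}"

definition negorth :: "(real^3) set" where
  "negorth = {y. \<forall>i. y$i \<le> 0}"

definition MFCQ :: "nat set \<Rightarrow> (nat \<Rightarrow> 'a::real_inner \<Rightarrow> real) \<Rightarrow> 'a \<Rightarrow> bool" where
  "MFCQ I \<phi> xbar \<longleftrightarrow>
     (\<exists>d. \<forall>i\<in>I. \<phi> i xbar = 0 \<longrightarrow> (\<exists>g. GDERIV (\<phi> i) xbar :> g \<and> inner g d < 0))"

end

theory Submission imports Defs begin

lemma powr32: "(t::real) \<ge> 0 \<Longrightarrow> t powr (3/2) = t * sqrt t"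
proof -
  assume t: "t \<ge> 0"
  show ?thesis
  proof (cases "t = 0")
    case False
    have "t powr (3/2) = t powr (1 + 1/2)" by simp
    also have "\<dots> = t powr 1 * t powr (1/2)" by (rule powr_add)
    also have "\<dots> = t * sqrt t" using t False by (simp add: powr_half_sqrt)
    finally show ?thesis .
  qed simp
qed

lemma cube_diff:
  fixes u v :: real assumes "\<bar>u\<bar> \<le> 1/9"
  shows "\<bar>u\<bar> powr (3/2) - \<bar>v\<bar> powr (3/2) \<le> \<bar>u - v\<bar>"
proof -
  define A where "A = sqrt \<bar>u\<bar>"
  define B where "B = sqrt \<bar>v\<bar>"
  have A0: "A \<ge> 0" and B0: "B \<ge> 0" unfolding A_def B_def by auto
  have Au: "A^2 = \<bar>u\<bar>" and Bv: "B^2 = \<bar>v\<bar>" unfolding A_def B_def by auto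
  have A13: "A \<le> 1/3"
  proof (rule power2_le_imp_le)
    show "A^2 \<le> (1/3)^2" using Au assms by (simp add: power2_eq_square)
  qed simp
  have lhs: "\<bar>u\<bar> powr (3/2) - \<bar>v\<bar> powr (3/2) = A^3 - B^3"
    using powr32[of "\<bar>u\<bar>"] powr32[of "\<bar>v\<bar>"] Au Bv A_def B_def
    by (simp add: power3_eq_cube power2_eq_square)
  have AB: "\<bar>A^2 - B^2\<bar> \<ge> 0" by simp
  have "A^3 - B^3 \<le> 3 * A * \<bar>A^2 - B^2\<bar>"
  proof (cases "A \<ge> B")
    case True
    have "3*A*(A^2-B^2) - (A^3-B^3) = (A-B)*(2*A^2+2*A*B-B^2)" by algebra
    also have "\<dots> \<ge> 0"
    proof -
      have "B*B \<le> A*A" using True B0 by (intro mult_mono) auto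
      moreover have "A*B \<ge> 0" using A0 B0 by simp
      moreover have "2*A^2+2*A*B-B^2 = 2*(A*A) + 2*(A*B) - B*B" by (simp add: power2_eq_square)
      moreover have "A*A \<ge> 0" by simp
      ultimately have "2*A^2+2*A*B-B^2 \<ge> 0" by linarith
      then show ?thesis using True by simp
    qed
    finally have k1: "A^3 - B^3 \<le> 3*A*(A^2-B^2)" by simp
    have "3*A*(A^2-B^2) \<le> 3*A*\<bar>A^2 - B^2\<bar>" using A0 by (intro mult_left_mono) auto
    then show ?thesis using k1 by linarith
  next
    case False
    then have "A^3 \<le> B^3" using A0 by (simp add: power_mono)
    moreover have "3 * A * \<bar>A^2 - B^2\<bar> \<ge> 0" using A0 AB by simp
    ultimately show ?thesis by linarith
  qed
  also have "\<dots> \<le> 3 * (1/3) * \<bar>A^2 - B^2\<bar>" using A13 AB by (intro mult_right_mono) auto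
  also have "\<dots> = \<bar>\<bar>u\<bar> - \<bar>v\<bar>\<bar>" using Au Bv by simp
  also have "\<dots> \<le> \<bar>u - v\<bar>" by (rule abs_triangle_ineq3)
  finally show ?thesis using lhs by simp
qed

lemma LU:
  fixes a b z :: real
  assumes a: "\<bar>a\<bar> \<le> 1/100" and b: "\<bar>b\<bar> \<le> 1/100" and P: "- a - b + 3/2*a^2 \<le> 0"
  shows "-(z^2/2 + a)/(1-b) \<le> z^2/2 + b - a*z"
proof -
  define q where "q = 1 - b"
  have q: "q \<ge> 99/100" "q \<le> 101/100" using b unfolding q_def by auto
  define A where "A = (1+q)/2"
  define c where "c = a + q*b"
  define s where "s = a + b"
  have s0: "s \<ge> 3/2*a^2" using P unfolding s_def by simp
  have a2: "a^2 \<ge> 0" by simp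
  have "c = s*(1 - s + 2*a) - a^2" unfolding c_def s_def q_def by (simp add: algebra_simps power2_eq_square)
  moreover have "s \<ge> 0" using s0 a2 by linarith
  moreover have "s*(1 - s + 2*a) \<ge> s * (96/100)"
    using s0 a b \<open>s \<ge> 0\<close> by (intro mult_left_mono) (auto simp: s_def)
  ultimately have c1: "c \<ge> 44/100 * a^2" using s0 by linarith
  have c0: "c \<ge> 0" using c1 a2 by linarith
  have "4*A*c \<ge> (398/100) * c" using q c0 unfolding A_def by (intro mult_right_mono) auto
  moreover have "q^2 \<le> (101/100)^2" using q by (intro power_mono) auto
  then have "q^2 \<le> 10201/10000" by (simp add: power2_eq_square)
  then have "q^2 * a^2 \<le> 10201/10000 * a^2" by (intro mult_right_mono) auto
  moreover have "(q*a)^2 = q^2*a^2" by (simp add: power_mult_distrib)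
  ultimately have disc: "4*A*c - (q*a)^2 \<ge> 0" using c1 a2 by linarith
  have A0: "A > 0" using q unfolding A_def by simp
  have "4*A*(A*z^2 - q*a*z + c) = (2*A*z - q*a)^2 + (4*A*c - (q*a)^2)"
    by (simp add: algebra_simps power2_eq_square)
  also have "\<dots> \<ge> 0" using disc by simp
  finally have "A*z^2 - q*a*z + c \<ge> 0" using A0 by (simp add: zero_le_mult_iff)
  then have "-(z^2/2 + a) \<le> q*(z^2/2 + b - a*z)" unfolding A_def c_def by (simp add: algebra_simps add_divide_distrib)
  then show ?thesis using q unfolding q_def by (simp add: divide_le_eq mult.commute)
qed

lemma core:
  fixes a b c u v r :: real
  assumes a: "\<bar>a\<bar> \<le> 1/100" and b: "\<bar>b\<bar> \<le> 1/100" and c: "\<bar>c\<bar> \<le> 1/100"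
    and u: "\<bar>u\<bar> \<le> 1/100" and v: "\<bar>v\<bar> \<le> 1/100" and P: "- a - b + 3/2*a^2 \<le> 0"
    and r: "r = max 0 (max (- v - 1/2*u^2 - a + b* v) (max (v - 1/2*u^2 - b + a*u) (u + \<bar>v\<bar> powr (3/2) - c)))"
  shows "\<exists>y1 y2. - y2 - 1/2*y1^2 - a + b*y2 \<le> 0 \<and> y2 - 1/2*y1^2 - b + a*y1 \<le> 0
     \<and> y1 + \<bar>y2\<bar> powr (3/2) - c \<le> 0 \<and> \<bar>u - y1\<bar> \<le> 3*r \<and> \<bar>v - y2\<bar> \<le> 2*r"
proof -
  have r0: "r \<ge> 0" using r by simp
  have f1: "- v - 1/2*u^2 - a + b* v \<le> r" and f2: "v - 1/2*u^2 - b + a*u \<le> r"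
    and f3: "u + \<bar>v\<bar> powr (3/2) - c \<le> r" using r by (simp_all add: le_max_iff_disj)
  have u2: "u^2 \<le> 1/10000"
  proof -
    have "\<bar>u\<bar>^2 \<le> (1/100)^2" using u by (intro power_mono) auto
    then show ?thesis by (simp add: power2_eq_square)
  qed
  have bv: "\<bar>b* v\<bar> \<le> 1/10000"
  proof -
    have "\<bar>b\<bar>*\<bar>v\<bar> \<le> (1/100)*(1/100)" using b v by (intro mult_mono) auto
    then show ?thesis by (simp add: abs_mult)
  qed
  have au: "\<bar>a*u\<bar> \<le> 1/10000"
  proof -
    have "\<bar>a\<bar>*\<bar>u\<bar> \<le> (1/100)*(1/100)" using a u by (intro mult_mono) auto
    then show ?thesis by (simp add: abs_mult)
  qed
  have vp: "\<bar>v\<bar> powr (3/2) \<le> \<bar>v\<bar>"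
  proof -
    have "sqrt \<bar>v\<bar> \<le> 1" using v by simp
    then have "\<bar>v\<bar> * sqrt \<bar>v\<bar> \<le> \<bar>v\<bar> * 1" by (intro mult_left_mono) auto
    then show ?thesis using powr32[of "\<bar>v\<bar>"] by simp
  qed
  have u2n: "u^2 \<ge> 0" by simp
  have e1: "- v - 1/2*u^2 - a + b* v \<le> 1/25" using u2n bv a v unfolding abs_le_iff by linarith
  have e2: "v - 1/2*u^2 - b + a*u \<le> 1/25" using u2n au b v unfolding abs_le_iff by linarith
  have e3: "u + \<bar>v\<bar> powr (3/2) - c \<le> 1/25" using vp u c v unfolding abs_le_iff by linarith
  have rb: "r \<le> 1/25" unfolding r by (intro max.boundedI e1 e2 e3) simp
  define q where "q = 1 - b"
  have q: "q \<ge> 99/100" "q \<le> 101/100" using b unfolding q_def by auto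
  define s where "s = 3*r"
  define y1 where "y1 = u - s"
  define L where "L = -(y1^2/2 + a)/q"
  define U where "U = y1^2/2 + b - a*y1"
  define y2 where "y2 = max L (min v U)"
  have LU': "L \<le> U" unfolding L_def U_def q_def using LU[OF _ _ P] a b by simp
  have y2L: "y2 \<ge> L" and y2U: "y2 \<le> U" unfolding y2_def using LU' by auto
  have qL: "q*L = -(y1^2/2 + a)" unfolding L_def using q by simp
  have diff: "u^2 - y1^2 \<le> 6/100 * r"
  proof -
    have "u^2 - y1^2 = s*(2*u - s)" unfolding y1_def by (simp add: algebra_simps power2_eq_square)
    also have "\<dots> \<le> s*(2*u)" using r0 unfolding s_def by (intro mult_left_mono) auto
    also have "\<dots> \<le> s*(2/100)" using r0 u unfolding s_def by (intro mult_left_mono) auto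
    finally show ?thesis unfolding s_def by simp
  qed
  have as: "\<bar>a* s\<bar> \<le> 3/100*r"
  proof -
    have "\<bar>a\<bar>* s \<le> (1/100)* s" using a r0 unfolding s_def by (intro mult_right_mono) auto
    then show ?thesis using r0 unfolding s_def by (simp add: abs_mult)
  qed
  have Lv: "L - v \<le> 2*r"
  proof -
    have "q*(L - v) \<le> 103/100*r" using qL f1 diff unfolding q_def by (simp add: algebra_simps)
    show ?thesis
    proof (rule ccontr)
      assume "\<not> ?thesis"
      then have "q*(2*r) < q*(L-v)" using q by (intro mult_strict_left_mono) auto
      moreover have "q*(2*r) \<ge> 99/100*(2*r)" using q r0 by (intro mult_right_mono) auto
      ultimately show False using \<open>q*(L - v) \<le> 103/100*r\<close> r0 by linarith
    qed
  qed
  have vU: "v - U \<le> 2*r"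
  proof -
    have "a*y1 = a*u - a* s" unfolding y1_def by (simp add: algebra_simps)
    then have h0: "v - U \<le> r + (u^2 - y1^2)/2 - a* s" using f2 unfolding U_def by (simp add: field_simps)
    define D where "D = (u^2 - y1^2)/2"
    have h1: "v - U \<le> r + D - a* s" using h0 unfolding D_def .
    have h2: "D \<le> 3/100*r" unfolding D_def using diff by simp
    have h3: "- (a* s) \<le> 3/100*r" using as by linarith
    show ?thesis using h1 h2 h3 r0 by linarith
  qed
  have dv: "\<bar>v - y2\<bar> \<le> 2*r" unfolding y2_def using Lv vU LU' r0 by auto
  have y2s: "\<bar>y2\<bar> \<le> 1/9" using dv v rb by (auto simp: abs_le_iff)
  have g1: "- y2 - 1/2*y1^2 - a + b*y2 \<le> 0"
  proof -
    have k1: "q*L \<le> q*y2" using y2L q by (intro mult_left_mono) auto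
    have k2: "q*y2 = y2 - b*y2" unfolding q_def by (simp add: algebra_simps)
    define Y where "Y = y1^2"
    have k3: "q*L = -(Y/2 + a)" using qL unfolding Y_def .
    have "- y2 - 1/2*Y - a + b*y2 \<le> 0" using k1 k2 k3 by linarith
    then show ?thesis unfolding Y_def .
  qed
  have g2: "y2 - 1/2*y1^2 - b + a*y1 \<le> 0" using y2U unfolding U_def by simp
  have g3: "y1 + \<bar>y2\<bar> powr (3/2) - c \<le> 0"
  proof -
    have h1: "\<bar>y2\<bar> powr (3/2) - \<bar>v\<bar> powr (3/2) \<le> \<bar>y2 - v\<bar>" by (rule cube_diff[OF y2s])
    have h2: "\<bar>y2 - v\<bar> \<le> 2*r" using dv by (simp add: abs_minus_commute)
    have h3: "y1 = u - 3*r" unfolding y1_def s_def by simp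
    show ?thesis using h1 h2 h3 f3 by linarith
  qed
  have d1: "\<bar>u - y1\<bar> \<le> 3*r" unfolding y1_def s_def using r0 by simp
  show ?thesis using g1 g2 g3 d1 dv by blast
qed

lemma cF_nth: "cF p x $ 1 = cf 1 p x" "cF p x $ 2 = cf 2 p x" "cF p x $ 3 = cf 3 p x"
  by (simp_all add: cF_def)

lemma rob:
  fixes p :: "real^3" and x :: "real^2"
  assumes pV: "p \<in> ball 0 (1/100)" and xU: "x \<in> ball 0 (1/100)" and P: "p \<in> Pset"
  shows "Gamma p \<noteq> {} \<and> infdist x (Gamma p) \<le> 5 * infdist (cF p x) negorth"
proof -
  have np: "norm p < 1/100" and nx: "norm x < 1/100" using pV xU by auto
  have cp: "\<bar>p$i\<bar> \<le> 1/100" for i using component_le_norm_cart[of p i] np by linarith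
  have cx: "\<bar>x$i\<bar> \<le> 1/100" for i using component_le_norm_cart[of x i] nx by linarith
  have P': "- p$1 - p$2 + 3/2*(p$1)^2 \<le> 0" using P by (simp add: Pset_def)
  have cf1: "cf 1 p x = - x$2 - 1/2*(x$1)^2 - p$1 + p$2 * x$2"
    and cf2: "cf 2 p x = x$2 - 1/2*(x$1)^2 - p$2 + p$1 * x$1"
    and cf3: "cf 3 p x = x$1 + \<bar>x$2\<bar> powr (3/2) - p$3" by (simp_all add: cf_def)
  define r where "r = max 0 (max (cf 1 p x) (max (cf 2 p x) (cf 3 p x)))"
  obtain y1 y2 where g1: "- y2 - 1/2*y1^2 - p$1 + p$2 * y2 \<le> 0"
    and g2: "y2 - 1/2*y1^2 - p$2 + p$1*y1 \<le> 0" and g3: "y1 + \<bar>y2\<bar> powr (3/2) - p$3 \<le> 0"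
    and d1: "\<bar>x$1 - y1\<bar> \<le> 3*r" and d2: "\<bar>x$2 - y2\<bar> \<le> 2*r"
    using core[OF cp cp cp cx cx P', of r] unfolding r_def cf1 cf2 cf3 by blast
  define y :: "real^2" where "y = (\<chi> i. if i = 1 then y1 else y2)"
  have y1: "y$1 = y1" and y2: "y$2 = y2" unfolding y_def by simp_all
  have yG: "y \<in> Gamma p" unfolding Gamma_def using g1 g2 g3 by (auto simp: cf_def y1 y2)
  have "dist x y = norm (x - y)" by (simp add: dist_norm)
  also have "\<dots> \<le> (\<Sum>i\<in>UNIV. \<bar>(x - y)$i\<bar>)" by (rule norm_le_l1_cart)
  also have "\<dots> = \<bar>x$1 - y1\<bar> + \<bar>x$2 - y2\<bar>" by (simp add: sum_2 y1 y2)
  finally have dxy: "dist x y \<le> 5*r" using d1 d2 by linarith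
  have "(0::real^3) \<in> negorth" unfolding negorth_def by simp
  then have neg: "negorth \<noteq> {}" by blast
  have "r \<le> infdist (cF p x) negorth"
    unfolding infdist_notempty[OF neg]
  proof (rule cINF_greatest[OF neg])
    fix z assume z: "z \<in> negorth"
    have cz: "(cF p x)$j \<le> dist (cF p x) z" for j
    proof -
      have "(cF p x)$j - z$j \<le> \<bar>(cF p x - z)$j\<bar>" by simp
      also have "\<dots> \<le> dist (cF p x) z" unfolding dist_norm by (metis component_le_norm_cart vector_minus_component)
      finally show ?thesis using z unfolding negorth_def by (smt (verit) mem_Collect_eq)
    qed
    note cz[of 1] cz[of 2] cz[of 3]
    then show "r \<le> dist (cF p x) z" unfolding r_def by (simp add: cF_nth)
  qed
  moreover have "infdist x (Gamma p) \<le> dist x y" using yG by (rule infdist_le)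
  ultimately show ?thesis using yG dxy by auto
qed

lemma deriv32: "((\<lambda>t::real. \<bar>t\<bar> powr (3/2)) has_real_derivative 0) (at 0)"
  unfolding DERIV_def
proof -
  have "((\<lambda>h::real. sqrt \<bar>h\<bar>) \<longlongrightarrow> sqrt \<bar>0\<bar>) (at 0)" by (intro tendsto_intros)
  then have lim: "((\<lambda>h::real. sqrt \<bar>h\<bar>) \<longlongrightarrow> 0) (at 0)" by simp
  have "eventually (\<lambda>h. norm ((\<bar>0 + h\<bar> powr (3/2) - \<bar>0::real\<bar> powr (3/2)) / h) \<le> sqrt \<bar>h\<bar>) (at 0)"
  proof (rule eventually_at_filter[THEN iffD2], rule always_eventually, intro allI impI)
    fix h :: real assume "h \<noteq> 0"
    then show "norm ((\<bar>0 + h\<bar> powr (3/2) - \<bar>0::real\<bar> powr (3/2)) / h) \<le> sqrt \<bar>h\<bar>"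
      using powr32[of "\<bar>h\<bar>"] by (simp add: abs_mult)
  qed
  then show "((\<lambda>h. (\<bar>0 + h\<bar> powr (3/2) - \<bar>0::real\<bar> powr (3/2)) / h) \<longlongrightarrow> 0) (at 0)"
    using lim by (rule Lim_null_comparison)
qed

lemma hd_nth: "((\<lambda>x. x$i) has_derivative (\<lambda>x. x$i)) F"
  by (rule bounded_linear_imp_has_derivative) (rule bounded_linear_vec_nth)

lemma d1: "((\<lambda>x. cf 1 0 x) has_derivative (\<lambda>h. - h$2)) (at (0::real^2))"
  unfolding cf_def by (auto intro!: derivative_eq_intros hd_nth)

lemma d2: "((\<lambda>x. cf 2 0 x) has_derivative (\<lambda>h. h$2)) (at (0::real^2))"
  unfolding cf_def by (auto intro!: derivative_eq_intros hd_nth)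

lemma d3: "(\<lambda>x. cf 3 0 x) differentiable (at (0::real^2))"
proof -
  have g: "(\<lambda>t::real. \<bar>t\<bar> powr (3/2)) differentiable (at ((0::real^2)$2))"
    using deriv32 by (auto intro: differentiableI has_field_derivative_imp_has_derivative)
  have n2: "(\<lambda>x::real^2. x$2) differentiable (at 0)"
    by (rule bounded_linear_imp_differentiable) auto
  have "((\<lambda>t::real. \<bar>t\<bar> powr (3/2)) \<circ> (\<lambda>x::real^2. x$2)) differentiable (at 0)"
    by (rule differentiable_chain_at[OF n2 g])
  moreover have "(\<lambda>x::real^2. x$1) differentiable (at 0)"
    by (rule bounded_linear_imp_differentiable) auto
  ultimately have "(\<lambda>x::real^2. x$1 + \<bar>x$2\<bar> powr (3/2) - 0) differentiable (at 0)"
    by (auto intro!: differentiable_add differentiable_diff simp: o_def)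
  then show ?thesis by (simp add: cf_def)
qed

lemma noMF: "\<not> MFCQ {1,2,3} (\<lambda>i x. cf i 0 x) (0::real^2)"
proof
  assume "MFCQ {1,2,3} (\<lambda>i x. cf i 0 x) (0::real^2)"
  then obtain d :: "real^2" where hd: "\<forall>i\<in>{1,2,3}. cf i 0 0 = 0 \<longrightarrow> (\<exists>g. GDERIV (cf i 0) 0 :> g \<and> inner g d < 0)"
    unfolding MFCQ_def by auto
  have "cf 1 0 (0::real^2) = 0" "cf 2 0 (0::real^2) = 0" by (simp_all add: cf_def)
  then obtain g1 g2 where G1: "GDERIV (cf 1 0) 0 :> g1" "inner g1 d < 0"
    and G2: "GDERIV (cf 2 0) 0 :> g2" "inner g2 d < 0" using hd by fastforce
  have "(\<lambda>h. inner h g1) = (\<lambda>h. - h$2)"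
    using G1(1) d1 unfolding gderiv_def by (intro has_derivative_unique) auto
  then have e1: "inner d g1 = - d$2" by meson
  have "(\<lambda>h. inner h g2) = (\<lambda>h. h$2)"
    using G2(1) d2 unfolding gderiv_def by (intro has_derivative_unique) auto
  then have e2: "inner d g2 = d$2" by meson
  show False using G1(2) G2(2) e1 e2 by (simp add: inner_commute)
qed

theorem mainTheorem12:
  shows "(\<exists>\<kappa>::real. \<exists>V U. \<kappa> \<ge> 0 \<and> open V \<and> (0::real^3) \<in> V \<and> open U \<and> (0::real^2) \<in> U \<and>
           (\<forall>p\<in>V \<inter> Pset. \<forall>x\<in>U. Gamma p \<noteq> {} \<and>
              infdist x (Gamma p) \<le> \<kappa> * infdist (cF p x) negorth))
       \<and> (0::real^3) \<in> Pset
       \<and> (\<forall>i\<in>{1,2,3}. cf i 0 (0::real^2) \<le> 0)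
       \<and> (\<forall>i\<in>{1,2,3}. (\<lambda>x. cf i 0 x) differentiable (at (0::real^2)))
       \<and> \<not> MFCQ {1,2,3} (\<lambda>i x. cf i 0 x) (0::real^2)"
proof (intro conjI)
  show "\<exists>\<kappa>::real. \<exists>V U. \<kappa> \<ge> 0 \<and> open V \<and> (0::real^3) \<in> V \<and> open U \<and> (0::real^2) \<in> U \<and>
           (\<forall>p\<in>V \<inter> Pset. \<forall>x\<in>U. Gamma p \<noteq> {} \<and>
              infdist x (Gamma p) \<le> \<kappa> * infdist (cF p x) negorth)"
  proof -
    have "\<forall>p\<in>ball (0::real^3) (1/100) \<inter> Pset. \<forall>x\<in>ball (0::real^2) (1/100). Gamma p \<noteq> {} \<and>
              infdist x (Gamma p) \<le> 5 * infdist (cF p x) negorth" using rob by blast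
    then show ?thesis by (intro exI[of _ 5] exI[of _ "ball 0 (1/100)"]) auto
  qed
  show "(0::real^3) \<in> Pset" by (simp add: Pset_def)
  show "\<forall>i\<in>{1,2,3}. cf i 0 (0::real^2) \<le> 0" by (simp add: cf_def)
  show "\<forall>i\<in>{1,2,3}. (\<lambda>x. cf i 0 x) differentiable (at (0::real^2))"
    using d1 d2 d3 by (auto intro: differentiableI)
  show "\<not> MFCQ {1,2,3} (\<lambda>i x. cf i 0 x) (0::real^2)" by (rule noMF)
qed

end
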